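(* For every word $\omega\in[n]^*$, $M_\omega B_\omega\subseteq\{x\in\mathbb{Z}^n: 0\le x\le u_\omega\}$ (coordinatewise), and $M_\omega B_\omega=u_\omega-M_\omega B_\omega$.
   Context: Let $[n]=\{1,\dots,n\}$, $e_1,\dots,e_n$ the standard basis of $\mathbb{Z}^n$; $\varepsilon$ is the empty word, $*$ concatenation. For words $\omega$ over $[n]$ define recursively $\delta^i_\omega\in\mathbb{Z}^n$: $\delta^i_\varepsilon=e_i$; $\delta^j_{\omega*j}=\delta^j_\omega$, $\delta^i_{\omega*j}=\delta^i_\omega-\delta^j_\omega$ for $i\ne j$. Let $B_\varepsilon=\{0\}$, $B_{\omega*j}=B_\omega+\{0,\delta^j_\omega\}$ (Minkowski sum). Let $M_\omega=(\delta^1_\omega\ \cdots\ \delta^n_\omega)^{-1}$ (inverse of the matrix with columns $\delta^i_\omega$). For $k\in[n]$ let $D^k=\mathrm{id}+e_k(\mathbb{1}-e_k)^T$ with $\mathbb{1}=(1,\dots,1)^T$. Define $u_\varepsilon=0$, $u_{\omega*j}=e_j+D^j u_\omega$. *)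

theory Defs
  imports "HOL-Analysis.Analysis"
begin

text \<open>Words over [n] are lists over a finite type 'n (the index set {1..n});
  vectors in Z^n are represented in real^'n, integrality is stated explicitly.
  Recursions "on the last letter" are implemented on the reversed word.\<close>

primrec delta_rev :: "'n::finite list \<Rightarrow> 'n \<Rightarrow> real^'n" where
  "delta_rev [] i = axis i 1"
| "delta_rev (j # w) i = (if i = j then delta_rev w j else delta_rev w i - delta_rev w j)"

definition delta :: "'n::finite list \<Rightarrow> 'n \<Rightarrow> real^'n" where
  "delta w i = delta_rev (rev w) i"

primrec B_rev :: "'n::finite list \<Rightarrow> (real^'n) set" where
  "B_rev [] = {0}"
| "B_rev (j # w) = {x + y | x y. x \<in> B_rev w \<and> y \<in> {0, delta_rev w j}}"

definition Bw :: "'n::finite list \<Rightarrow> (real^'n) set" where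
  "Bw w = B_rev (rev w)"

definition Mw :: "'n::finite list \<Rightarrow> real^'n^'n" where
  "Mw w = matrix_inv (\<chi> i j. delta w j $ i)"

definition Dmat :: "'n::finite \<Rightarrow> real^'n^'n" where
  "Dmat k = mat 1 + (\<chi> i j. axis k (1::real) $ i * ((\<chi> l. 1) - axis k 1) $ j)"

primrec u_rev :: "'n::finite list \<Rightarrow> real^'n" where
  "u_rev [] = 0"
| "u_rev (j # w) = axis j 1 + Dmat j *v u_rev w"

definition uw :: "'n::finite list \<Rightarrow> real^'n" where
  "uw w = u_rev (rev w)"

end

theory Submission
  imports Defs
begin

definition Dl :: "'n::finite list \<Rightarrow> real^'n^'n" where
  "Dl w = (\<chi> i k. delta_rev w k $ i)"

definition Emat :: "'n::finite \<Rightarrow> real^'n^'n" where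
  "Emat k = mat 1 - (\<chi> i j. axis k (1::real) $ i * ((\<chi> l. 1) - axis k 1) $ j)"

primrec Pl :: "'n::finite list \<Rightarrow> real^'n^'n" where
  "Pl [] = mat 1"
| "Pl (j # w) = Dmat j ** Pl w"

definition Nm :: "'n::finite \<Rightarrow> real^'n^'n" where
  "Nm k = (\<chi> i j. axis k (1::real) $ i * ((\<chi> l. 1) - axis k 1) $ j)"

lemma Nsq: "Nm k ** Nm k = 0"
  by (auto simp add: vec_eq_iff matrix_matrix_mult_def axis_def Nm_def intro!: sum.neutral)

lemma Dmat_N: "Dmat k = mat 1 + Nm k" by (simp add: Dmat_def Nm_def)
lemma Emat_N: "Emat k = mat 1 - Nm k" by (simp add: Emat_def Nm_def)

lemma mrd: "((A::real^'n::finite^'n) + B) ** C = A ** C + B ** C"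
  by (simp add: vec_eq_iff matrix_matrix_mult_def sum.distrib distrib_right)
lemma mls: "(A::real^'n::finite^'n) ** (B - C) = A ** B - A ** C"
  by (simp add: vec_eq_iff matrix_matrix_mult_def sum_subtractf right_diff_distrib)
lemma mrs: "((A::real^'n::finite^'n) - B) ** C = A ** C - B ** C"
  by (simp add: vec_eq_iff matrix_matrix_mult_def sum_subtractf left_diff_distrib)

lemma DE: "Dmat k ** Emat k = mat 1"
  unfolding Dmat_N Emat_N
  by (simp add: matrix_add_ldistrib mls mrd mrs Nsq)

lemma ED: "Emat k ** Dmat k = mat 1"
  unfolding Dmat_N Emat_N
  by (simp add: matrix_add_ldistrib mls mrd mrs Nsq)

lemma Dl_cons: "Dl (j # w) = Dl w ** Emat j"
proof -
  have "(Dl w ** Emat j) $ i $ k = delta_rev (j # w) k $ i" for i k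
  proof -
    have "(Dl w ** Emat j) $ i $ k = (\<Sum>l\<in>UNIV. delta_rev w l $ i *
        ((if l = k then 1 else 0) - (if l = j then 1 else 0) * (if k = j then 0 else 1)))"
      by (simp add: matrix_matrix_mult_def Dl_def Emat_def mat_def axis_def)
    also have "\<dots> = (\<Sum>l\<in>UNIV. (if l = k then delta_rev w l $ i else 0) -
        (if l = j then delta_rev w l $ i * (if k = j then 0 else 1) else 0))"
      by (rule sum.cong) auto
    also have "\<dots> = (\<Sum>l\<in>UNIV. (if l = k then delta_rev w l $ i else 0)) -
        (\<Sum>l\<in>UNIV. (if l = j then delta_rev w l $ i * (if k = j then 0 else 1) else 0))"
      by (simp add: sum_subtractf)
    also have "\<dots> = delta_rev (j # w) k $ i"
      by simp
    finally show ?thesis .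
  qed
  then show ?thesis by (simp add: vec_eq_iff Dl_def)
qed

lemma PD: "Pl w ** Dl w = mat 1 \<and> Dl w ** Pl w = mat 1"
proof (induction w)
  case Nil
  have "Dl [] = (mat 1 :: real^'a^'a)"
    by (simp add: Dl_def vec_eq_iff mat_def axis_def)
  then show ?case by simp
next
  case (Cons j w)
  have "Pl (j#w) ** Dl (j#w) = Dmat j ** (Pl w ** Dl w) ** Emat j"
    by (simp add: Dl_cons matrix_mul_assoc)
  also have "\<dots> = mat 1" using Cons DE by simp
  moreover have "Dl (j#w) ** Pl (j#w) = Dl w ** (Emat j ** Dmat j) ** Pl w"
    by (simp add: Dl_cons matrix_mul_assoc)
  moreover have "\<dots> = Dl w ** Pl w" by (simp only: ED matrix_mul_rid)
  moreover have "\<dots> = mat 1" using Cons by simp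
  ultimately show ?case by simp
qed

lemma inv_eq: "matrix_inv (Dl w) = Pl w"
proof -
  have ex: "\<exists>Q. Dl w ** Q = mat 1 \<and> Q ** Dl w = mat 1" using PD by blast
  define Q where "Q = matrix_inv (Dl w)"
  have Q: "Dl w ** Q = mat 1 \<and> Q ** Dl w = mat 1"
    unfolding Q_def matrix_inv_def by (rule someI_ex[OF ex])
  have "Q = Q ** (Dl w ** Pl w)" using PD[of w] by simp
  also have "\<dots> = (Q ** Dl w) ** Pl w" by (simp add: matrix_mul_assoc)
  also have "\<dots> = Pl w" using Q by simp
  finally show ?thesis unfolding Q_def .
qed

lemma Mw_eq: "Mw w = Pl (rev w)"
proof -
  have "(\<chi> i j. delta w j $ i) = Dl (rev w)"
    by (simp add: Dl_def delta_def)
  then show ?thesis by (simp add: Mw_def inv_eq)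
qed

lemma P_delta: "Pl w *v delta_rev w j = axis j 1"
proof -
  have "Dl w *v axis j 1 = delta_rev w j"
    by (simp add: matrix_vector_mult_basis column_def Dl_def vec_eq_iff)
  then have "Pl w *v delta_rev w j = (Pl w ** Dl w) *v axis j 1"
    by (metis matrix_vector_mul_assoc)
  then show ?thesis using PD[of w] by simp
qed

lemma Dmat_v: "Dmat j *v x = x + ((\<Sum>l\<in>UNIV. x $ l) - x $ j) *\<^sub>R axis j 1"
proof -
  have "(Nm j *v x) $ i = (((\<Sum>l\<in>UNIV. x $ l) - x $ j) *\<^sub>R axis j 1) $ i" for i
  proof -
    have "(Nm j *v x) $ i = axis j 1 $ i * (\<Sum>l\<in>UNIV. (1 - axis j 1 $ l) * x $ l)"
      by (simp add: Nm_def matrix_vector_mult_def sum_distrib_left mult.assoc)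
    also have "(\<Sum>l\<in>UNIV. (1 - axis j 1 $ l) * x $ l) = (\<Sum>l\<in>UNIV. x $ l - (if l = j then x $ l else 0))"
      by (rule sum.cong) (auto simp: axis_def)
    also have "\<dots> = (\<Sum>l\<in>UNIV. x $ l) - x $ j"
      by (simp add: sum_subtractf)
    finally show ?thesis by (simp add: axis_def)
  qed
  then have "Nm j *v x = ((\<Sum>l\<in>UNIV. x $ l) - x $ j) *\<^sub>R axis j 1" by (simp add: vec_eq_iff)
  then show ?thesis by (simp add: Dmat_N matrix_vector_mult_add_rdistrib)
qed

lemma Dmat_axis: "Dmat j *v axis j 1 = axis j (1::real)"
  by (simp add: Dmat_v axis_def)

lemma grp: "(a::'a::ab_group_add) + b - (c + d) = b - c + (a - d)"
  by (simp add: algebra_simps)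

lemma u_step: "u_rev (j#w) - (Dmat j *v x + y) = Dmat j *v (u_rev w - x) + (axis j 1 - y)"
proof -
  have eq1: "Dmat j *v (u_rev w - x) = Dmat j *v u_rev w - Dmat j *v x"
    by (rule matrix_vector_mult_diff_distrib)
  show ?thesis unfolding eq1 u_rev.simps by (simp add: vec_eq_iff)
qed

definition Sl :: "'n::finite list \<Rightarrow> (real^'n) set" where
  "Sl w = (\<lambda>b. Pl w *v b) ` B_rev w"

lemma S_cons: "Sl (j # w) = {Dmat j *v x + y | x y. x \<in> Sl w \<and> y \<in> {0, axis j 1}}"
proof -
  have e: "Pl (j#w) *v (x + y) = Dmat j *v (Pl w *v x) + Dmat j *v (Pl w *v y)" for x y
    by (simp add: matrix_vector_right_distrib matrix_vector_mul_assoc)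
  have d: "Dmat j *v (Pl w *v delta_rev w j) = axis j 1"
    by (simp add: P_delta Dmat_axis)
  show ?thesis
  proof
    show "Sl (j # w) \<subseteq> {Dmat j *v x + y | x y. x \<in> Sl w \<and> y \<in> {0, axis j 1}}"
    proof
      fix z assume "z \<in> Sl (j # w)"
      then obtain b c where b: "b \<in> B_rev w" and c: "c \<in> {0, delta_rev w j}" and z: "z = Pl (j#w) *v (b + c)"
        unfolding Sl_def by auto
      have "z = Dmat j *v (Pl w *v b) + Dmat j *v (Pl w *v c)" using z e by simp
      moreover have "Dmat j *v (Pl w *v c) \<in> {0, axis j 1}" using c d by auto
      moreover have "Pl w *v b \<in> Sl w" using b unfolding Sl_def by blast
      ultimately show "z \<in> {Dmat j *v x + y | x y. x \<in> Sl w \<and> y \<in> {0, axis j 1}}" by blast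
    qed
    show "{Dmat j *v x + y | x y. x \<in> Sl w \<and> y \<in> {0, axis j 1}} \<subseteq> Sl (j # w)"
    proof
      fix z assume "z \<in> {Dmat j *v x + y | x y. x \<in> Sl w \<and> y \<in> {0, axis j 1}}"
      then obtain b y where b: "b \<in> B_rev w" and y: "y \<in> {0, axis j 1}" and z: "z = Dmat j *v (Pl w *v b) + y"
        unfolding Sl_def by auto
      define c where "c = (if y = 0 then 0 else delta_rev w j)"
      have c: "c \<in> {0, delta_rev w j}" by (simp add: c_def)
      have "Dmat j *v (Pl w *v c) = y" using y d by (auto simp: c_def)
      then have "z = Pl (j#w) *v (b + c)" using z e by simp
      moreover have "b + c \<in> B_rev (j # w)" using b c by auto
      ultimately show "z \<in> Sl (j # w)" unfolding Sl_def by blast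
    qed
  qed
qed

lemma main: "(\<forall>x\<in>Sl w. \<forall>i. x $ i \<in> \<int> \<and> 0 \<le> x $ i \<and> x $ i \<le> u_rev w $ i) \<and>
   (\<forall>x\<in>Sl w. u_rev w - x \<in> Sl w)"
proof (induction w)
  case Nil
  then show ?case by (simp add: Sl_def)
next
  case (Cons j w)
  have A: "\<forall>i. (Dmat j *v x + y) $ i \<in> \<int> \<and> 0 \<le> (Dmat j *v x + y) $ i \<and>
            (Dmat j *v x + y) $ i \<le> u_rev (j#w) $ i"
    if x: "x \<in> Sl w" and y: "y \<in> {0, axis j 1}" for x y
  proof
    fix i
    have xb: "\<And>i. x $ i \<in> \<int> \<and> 0 \<le> x $ i \<and> x $ i \<le> u_rev w $ i" using Cons x by blast
    have sm: "(\<Sum>l\<in>UNIV. x $ l) \<le> (\<Sum>l\<in>UNIV. u_rev w $ l)"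
      by (rule sum_mono) (use xb in blast)
    have s0: "0 \<le> (\<Sum>l\<in>UNIV. x $ l)" by (rule sum_nonneg) (use xb in blast)
    have si: "(\<Sum>l\<in>UNIV. x $ l) \<in> \<int>" by (rule Ints_sum) (use xb in blast)
    have yi: "y $ i \<in> \<int> \<and> 0 \<le> y $ i \<and> y $ i \<le> (if i = j then 1 else 0)"
      using y by (auto simp: axis_def)
    show "(Dmat j *v x + y) $ i \<in> \<int> \<and> 0 \<le> (Dmat j *v x + y) $ i \<and>
            (Dmat j *v x + y) $ i \<le> u_rev (j#w) $ i"
    proof (cases "i = j")
      case True
      have eq: "(Dmat j *v x + y) $ i = (\<Sum>l\<in>UNIV. x $ l) + y $ i"
        using True by (simp add: Dmat_v axis_def)
      have u: "u_rev (j#w) $ i = 1 + (\<Sum>l\<in>UNIV. u_rev w $ l)"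
        using True by (simp add: Dmat_v axis_def)
      show ?thesis unfolding eq u using sm s0 si yi True by auto
    next
      case False
      have eq: "(Dmat j *v x + y) $ i = x $ i + y $ i"
        using False by (simp add: Dmat_v axis_def)
      have u: "u_rev (j#w) $ i = u_rev w $ i"
        using False by (simp add: Dmat_v axis_def)
      show ?thesis unfolding eq u using xb[of i] yi False by auto
    qed
  qed
  have B: "u_rev (j#w) - (Dmat j *v x + y) \<in> Sl (j#w)"
    if x: "x \<in> Sl w" and y: "y \<in> {0, axis j 1}" for x y
  proof -
    have "u_rev w - x \<in> Sl w" using Cons x by blast
    moreover have "axis j 1 - y \<in> {0, axis j 1}" using y by auto
    moreover have "u_rev (j#w) - (Dmat j *v x + y) = Dmat j *v (u_rev w - x) + (axis j 1 - y)"
      by (rule u_step)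
    ultimately show ?thesis unfolding S_cons[of j w] by blast
  qed
  show ?case
  proof (intro conjI ballI)
    fix z assume "z \<in> Sl (j # w)"
    then obtain x y where x: "x \<in> Sl w" and y: "y \<in> {0, axis j 1}" and z: "z = Dmat j *v x + y"
      unfolding S_cons[of j w] by blast
    show "\<forall>i. z $ i \<in> \<int> \<and> 0 \<le> z $ i \<and> z $ i \<le> u_rev (j # w) $ i"
      unfolding z by (rule A[OF x y])
  next
    fix z assume "z \<in> Sl (j # w)"
    then obtain x y where x: "x \<in> Sl w" and y: "y \<in> {0, axis j 1}" and z: "z = Dmat j *v x + y"
      unfolding S_cons[of j w] by blast
    show "u_rev (j # w) - z \<in> Sl (j # w)"
      unfolding z by (rule B[OF x y])
  qed
qed

theorem corollary3p3:
  fixes w :: "'n::finite list"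
  shows "(\<forall>b \<in> Bw w. (\<forall>i. (Mw w *v b) $ i \<in> \<int> \<and> 0 \<le> (Mw w *v b) $ i
                              \<and> (Mw w *v b) $ i \<le> uw w $ i))
       \<and> (\<lambda>b. Mw w *v b) ` Bw w = (\<lambda>b. uw w - Mw w *v b) ` Bw w"
proof -
  have S: "(\<lambda>b. Mw w *v b) ` Bw w = Sl (rev w)"
    by (simp add: Sl_def Bw_def Mw_eq)
  have S2: "(\<lambda>b. uw w - Mw w *v b) ` Bw w = (\<lambda>x. uw w - x) ` Sl (rev w)"
    by (simp add: Sl_def Bw_def Mw_eq image_image)
  have m: "(\<forall>x\<in>Sl (rev w). \<forall>i. x $ i \<in> \<int> \<and> 0 \<le> x $ i \<and> x $ i \<le> uw w $ i) \<and>
   (\<forall>x\<in>Sl (rev w). uw w - x \<in> Sl (rev w))" using main[of "rev w"] by (simp add: uw_def)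
  have eq: "Sl (rev w) = (\<lambda>x. uw w - x) ` Sl (rev w)"
  proof
    show "Sl (rev w) \<subseteq> (\<lambda>x. uw w - x) ` Sl (rev w)"
    proof
      fix x assume "x \<in> Sl (rev w)"
      then have "uw w - x \<in> Sl (rev w)" using m by blast
      then show "x \<in> (\<lambda>x. uw w - x) ` Sl (rev w)"
        by (rule rev_image_eqI) simp
    qed
    show "(\<lambda>x. uw w - x) ` Sl (rev w) \<subseteq> Sl (rev w)" using m by blast
  qed
  show ?thesis
  proof (intro conjI ballI allI)
    fix b i assume "b \<in> Bw w"
    then have "Mw w *v b \<in> Sl (rev w)" using S by blast
    then show "(Mw w *v b) $ i \<in> \<int>" "0 \<le> (Mw w *v b) $ i" "(Mw w *v b) $ i \<le> uw w $ i"
      using m by blast+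
  next
    show "(\<lambda>b. Mw w *v b) ` Bw w = (\<lambda>b. uw w - Mw w *v b) ` Bw w"
      unfolding S S2 by (rule eq)
  qed
qed

end
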